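(* Let $\mathcal{A}\subset[\mathbb{N}]^{<\infty}$ be nonempty and hereditary, let $P\subset\mathbb{N}$ be infinite and assume $\alpha_0=\mathbb{I}(\mathcal{A},P)<\omega_1$. Then there are an approximating family $(B_n(\alpha))_{n\in\mathbb{N},\alpha\text{ countable limit}}$, defining a transfinite family $(\mathcal{G}_\alpha)_{\alpha<\omega_1}$, and an infinite $L\subset P$ such that $$\mathcal{G}_{\alpha_0}^L\subset\mathcal{A}\cap[L]^{<\infty}\subset\mathcal{G}_{\alpha_0}\cap[L]^{<\infty}.$$
   Context: An approximating family assigns to each countable limit ordinal $\alpha$ finite sets $B_n(\alpha)\subset[0,\alpha)$, $n\in\mathbb{N}$, with $B_n(\alpha)\subset B_{n+1}(\alpha)$ and $\lim_n\max B_n(\alpha)=\alpha$. The transfinite family it defines: $\mathcal{G}_0=\{\emptyset\}$; $\mathcal{G}_{\beta+1}=\{\{n\}\cup E:n\in\mathbb{N},E\in\mathcal{G}_\beta\}\cup\{\emptyset\}$; for limit $\alpha$, $\mathcal{G}_\alpha=\{\emptyset\}\cup\{E\ne\emptyset:E\in\bigcup_{\beta\in B_{\min E}(\alpha)}\mathcal{G}_\beta\}$. For $L=\{l_1<l_2<\dots\}$, $\mathcal{G}^L=\{\{l_i:i\in E\}:E\in\mathcal{G}\}$. Fix any transfinite family $(\mathcal{F}_\alpha)$; a hereditary $\mathcal{A}$ is $\alpha$-large on an infinite $P$ if every infinite $M\subset P$ contains an infinite $N$ with $\mathcal{F}_\alpha^N\subset\mathcal{A}$ (this is independent of the transfinite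 family), and $\mathbb{I}(\mathcal{A},P)=\sup\{\alpha<\omega_1:\mathcal{A}\text{ is }\alpha\text{-large on }P\}$. Hereditary = closed under subsets; $[L]^{<\infty}$ = finite subsets of $L$. *)

theory Defs
  imports Main "HOL-Library.Countable_Set"
begin

text \<open>Countable ordinals are modelled by a well-ordered type 'a that is
uncountable but all of whose proper initial segments are countable (i.e. a copy
of omega_1). Natural numbers start at 0 here; L is enumerated by enumerate L.\<close>

definition ozero :: "'a::wellorder" where
  "ozero = (LEAST x. True)"

definition is_succ_of :: "'a::wellorder \<Rightarrow> 'a \<Rightarrow> bool" where
  "is_succ_of \<alpha> \<beta> \<longleftrightarrow> \<beta> < \<alpha> \<and> (\<forall>\<gamma>. \<beta> < \<gamma> \<longrightarrow> \<alpha> \<le> \<gamma>)"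

definition is_limit :: "'a::wellorder \<Rightarrow> bool" where
  "is_limit \<alpha> \<longleftrightarrow> \<alpha> \<noteq> ozero \<and> \<not> (\<exists>\<beta>. is_succ_of \<alpha> \<beta>)"

definition approx_family :: "('a::wellorder \<Rightarrow> nat \<Rightarrow> 'a set) \<Rightarrow> bool" where
  "approx_family B \<longleftrightarrow>
     (\<forall>\<alpha>. is_limit \<alpha> \<longrightarrow>
        (\<forall>n. finite (B \<alpha> n) \<and> B \<alpha> n \<subseteq> {..<\<alpha>} \<and> B \<alpha> n \<subseteq> B \<alpha> (Suc n)) \<and>
        (\<forall>\<beta><\<alpha>. \<exists>N. \<forall>n\<ge>N. B \<alpha> n \<noteq> {} \<and> \<beta> \<le> Max (B \<alpha> n)))"

definition Gstep :: "('a::wellorder \<Rightarrow> nat \<Rightarrow> 'a set) \<Rightarrow> ('a \<Rightarrow> nat set set) \<Rightarrow> 'a \<Rightarrow> nat set set" where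
  "Gstep B f \<alpha> =
     (if \<alpha> = ozero then {{}}
      else if (\<exists>\<beta>. is_succ_of \<alpha> \<beta>)
        then {insert n E | n E. E \<in> f (THE \<beta>. is_succ_of \<alpha> \<beta>)} \<union> {{}}
      else {{}} \<union> {E. E \<noteq> {} \<and> (\<exists>\<beta>\<in>B \<alpha> (Min E). E \<in> f \<beta>)})"

definition G :: "('a::wellorder \<Rightarrow> nat \<Rightarrow> 'a set) \<Rightarrow> 'a \<Rightarrow> nat set set" where
  "G B = wfrec {(x, y). x < y} (Gstep B)"

text \<open>F^L = {{l_i : i in E} : E in F}, l_0 < l_1 < ... enumerating L.\<close>
definition spread :: "nat set \<Rightarrow> nat set set \<Rightarrow> nat set set" where
  "spread L F = (\<lambda>E. enumerate L ` E) ` F"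

definition hereditary :: "nat set set \<Rightarrow> bool" where
  "hereditary A \<longleftrightarrow> (\<forall>E\<in>A. \<forall>F. F \<subseteq> E \<longrightarrow> F \<in> A)"

definition large :: "('a::wellorder \<Rightarrow> nat \<Rightarrow> 'a set) \<Rightarrow> nat set set \<Rightarrow> nat set \<Rightarrow> 'a \<Rightarrow> bool" where
  "large B0 A P \<alpha> \<longleftrightarrow>
     (\<forall>M. M \<subseteq> P \<and> infinite M \<longrightarrow> (\<exists>N. N \<subseteq> M \<and> infinite N \<and> spread N (G B0 \<alpha>) \<subseteq> A))"

definition index :: "('a::wellorder \<Rightarrow> nat \<Rightarrow> 'a set) \<Rightarrow> nat set set \<Rightarrow> nat set \<Rightarrow> 'a" where
  "index B0 A P = (LEAST b. \<forall>\<alpha>. large B0 A P \<alpha> \<longrightarrow> \<alpha> \<le> b)"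

end

theory Submission
  imports Defs
begin

lemma ozero_le: "ozero \<le> (x::'a::wellorder)"
  unfolding ozero_def by (rule Least_le) simp

definition osucc :: "'a::wellorder \<Rightarrow> 'a" where
  "osucc x = (LEAST y. x < y)"

lemma osucc_is_succ:
  assumes "\<exists>y. x < (y::'a::wellorder)"
  shows "is_succ_of (osucc x) x"
  unfolding is_succ_of_def osucc_def
  using assms by (metis LeastI_ex Least_le)

lemma succ_unique:
  "is_succ_of (a::'a::wellorder) b \<Longrightarrow> is_succ_of a c \<Longrightarrow> b = c"
  unfolding is_succ_of_def by (meson leD linorder_neqE)

lemma succ_eq_osucc:
  "is_succ_of (a::'a::wellorder) b \<Longrightarrow> a = osucc b"
  unfolding is_succ_of_def osucc_def
  by (metis (no_types, lifting) Least_equality)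

lemma the_succ:
  "is_succ_of (a::'a::wellorder) b \<Longrightarrow> (THE c. is_succ_of a c) = b"
  using succ_unique by blast

lemma succ_not_zero: "is_succ_of (a::'a::wellorder) b \<Longrightarrow> a \<noteq> ozero"
  unfolding is_succ_of_def using ozero_le leD by blast

lemma succ_less_iff: "is_succ_of (a::'a::wellorder) b \<Longrightarrow> (g < a) = (g \<le> b)"
  unfolding is_succ_of_def by (meson le_less_trans not_le)

lemma limit_succ_less:
  assumes "is_limit (l::'a::wellorder)" "r < l" "\<exists>y. r < (y::'a)"
  shows "osucc r < l"
proof -
  have s: "is_succ_of (osucc r) r" using osucc_is_succ assms(3) .
  then have "osucc r \<le> l" using assms(2) unfolding is_succ_of_def by auto
  moreover have "osucc r \<noteq> l" using s assms(1) unfolding is_limit_def by auto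
  ultimately show ?thesis by auto
qed

lemma limit_pos: "is_limit (l::'a::wellorder) \<Longrightarrow> ozero < l"
  unfolding is_limit_def using ozero_le order.not_eq_order_implies_strict by metis

lemma ord_cases:
  obtains "(a::'a::wellorder) = ozero" | b where "is_succ_of a b" | "is_limit a"
  unfolding is_limit_def by blast

lemma succ_less: "is_succ_of (a::'a::wellorder) b \<Longrightarrow> b < a"
  unfolding is_succ_of_def by auto

lemma G_unfold: "G B \<alpha> = Gstep B (cut (G B) {(x, y). x < y} \<alpha>) \<alpha>"
  unfolding G_def by (rule wfrec) (rule wf)

lemma G_zero: "G B ozero = {{}}"
  by (subst G_unfold) (simp add: Gstep_def)

lemma G_succ: "is_succ_of a b \<Longrightarrow> G B a = {insert n E |n E. E \<in> G B b} \<union> {{}}"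
  apply (subst G_unfold)
  using succ_not_zero[of a b] the_succ[of a b] succ_less[of a b]
  by (auto simp add: Gstep_def cut_apply)

lemma G_lim:
  assumes B: "approx_family B" and l: "is_limit a"
  shows "G B a = {{}} \<union> {E. E \<noteq> {} \<and> (\<exists>\<beta>\<in>B a (Min E). E \<in> G B \<beta>)}"
proof -
  have sub: "\<And>n. B a n \<subseteq> {..<a}" using B l unfolding approx_family_def by blast
  have nz: "a \<noteq> ozero" "\<not> (\<exists>b. is_succ_of a b)" using l unfolding is_limit_def by auto
  have e: "\<And>E. (\<exists>\<beta>\<in>B a (Min E). E \<in> cut (G B) {(x, y). x < y} a \<beta>) = (\<exists>\<beta>\<in>B a (Min E). E \<in> G B \<beta>)"
  proof (rule bex_cong)
    fix E \<beta> assume "\<beta> \<in> B a (Min E)"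
    then have "\<beta> < a" using sub by blast
    then show "(E \<in> cut (G B) {(x, y). x < y} a \<beta>) = (E \<in> G B \<beta>)"
      by (simp add: cut_apply)
  qed simp
  show ?thesis
    apply (subst G_unfold)
    unfolding Gstep_def if_not_P[OF nz(1)] if_not_P[OF nz(2)] using e by simp
qed

lemma B_mono:
  assumes B: "approx_family B" and l: "is_limit a" and mn: "m \<le> n"
  shows "B a m \<subseteq> B a n"
proof -
  have "\<And>k. B a k \<subseteq> B a (Suc k)" using B l unfolding approx_family_def by blast
  then show ?thesis using lift_Suc_mono_le[of "B a"] mn by blast
qed

lemma B_sub: "approx_family B \<Longrightarrow> is_limit a \<Longrightarrow> \<beta> \<in> B a n \<Longrightarrow> \<beta> < a"
  unfolding approx_family_def by blast

lemma B_fin: "approx_family B \<Longrightarrow> is_limit a \<Longrightarrow> finite (B a n)"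
  unfolding approx_family_def by blast

lemma G_empty: "approx_family B \<Longrightarrow> {} \<in> G B a"
  by (cases a rule: ord_cases) (auto simp add: G_zero G_succ G_lim)

lemma G_finite:
  assumes B: "approx_family B"
  shows "E \<in> G B a \<Longrightarrow> finite E"
proof (induction a arbitrary: E rule: less_induct)
  case (less a)
  show ?case
  proof (cases a rule: ord_cases)
    case 1 then show ?thesis using less.prems by (simp add: G_zero)
  next
    case (2 b)
    then show ?thesis using less succ_less[OF 2] by (auto simp add: G_succ)
  next
    case 3
    then show ?thesis using less B_sub[OF B 3] by (auto simp add: G_lim[OF B])
  qed
qed

lemma G_her:
  assumes B: "approx_family B"
  shows "E \<in> G B a \<Longrightarrow> F \<subseteq> E \<Longrightarrow> F \<in> G B a"
proof (induction a arbitrary: E F rule: less_induct)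
  case (less a)
  show ?case
  proof (cases a rule: ord_cases)
    case 1 then show ?thesis using less.prems by (auto simp add: G_zero)
  next
    case (2 b)
    from less.prems(1) 2 have "E = {} \<or> (\<exists>n E'. E = insert n E' \<and> E' \<in> G B b)"
      by (auto simp add: G_succ)
    then show ?thesis
    proof
      assume "E = {}" then show ?thesis using less.prems 2 by (auto simp add: G_succ)
    next
      assume "\<exists>n E'. E = insert n E' \<and> E' \<in> G B b"
      then obtain n E' where e: "E = insert n E'" "E' \<in> G B b" by blast
      show ?thesis
      proof (cases "n \<in> F")
        case True
        have "F - {n} \<subseteq> E'" using e(1) less.prems(2) by auto
        then have "F - {n} \<in> G B b" using less.IH[OF succ_less[OF 2] e(2)] by simp
        then have "insert n (F - {n}) \<in> G B a" unfolding G_succ[OF 2] by blast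
        then show ?thesis using True by (simp add: insert_absorb)
      next
        case False
        have "F \<subseteq> E'" using e(1) less.prems(2) False by auto
        then have "F \<in> G B b" using less.IH[OF succ_less[OF 2] e(2)] by simp
        then have "F = {} \<or> insert (Min F) F \<in> G B a" unfolding G_succ[OF 2] by blast
        moreover have "F \<noteq> {} \<Longrightarrow> insert (Min F) F = F"
          using G_finite[OF B \<open>F \<in> G B b\<close>] by (simp add: insert_absorb)
        ultimately show ?thesis using G_empty[OF B] by (cases "F = {}") auto
      qed
    qed
  next
    case 3
    show ?thesis
    proof (cases "F = {}")
      case True then show ?thesis using G_empty[OF B] by simp
    next
      case False
      then have En: "E \<noteq> {}" using less.prems by auto
      then obtain \<beta> where b: "\<beta> \<in> B a (Min E)" "E \<in> G B \<beta>"
        using less.prems 3 by (auto simp add: G_lim[OF B])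
      have fE: "finite E" using G_finite[OF B less.prems(1)] .
      have "F \<in> G B \<beta>" using less.IH[OF B_sub[OF B 3 b(1)] b(2) less.prems(2)] .
      moreover have "Min E \<le> Min F" using fE False less.prems(2)
        by (meson Min_antimono)
      then have "\<beta> \<in> B a (Min F)" using B_mono[OF B 3] b(1) by blast
      ultimately show ?thesis using 3 False by (auto simp add: G_lim[OF B])
    qed
  qed
qed

lemma G_sub_succ:
  assumes B: "approx_family B" and s: "is_succ_of a b"
  shows "G B b \<subseteq> G B a"
proof
  fix E assume E: "E \<in> G B b"
  show "E \<in> G B a"
  proof (cases "E = {}")
    case True then show ?thesis using G_empty[OF B] by simp
  next
    case False
    then have "insert (Min E) E = E" using G_finite[OF B E] by (simp add: insert_absorb)
    then show ?thesis using E s by (auto simp add: G_succ)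
  qed
qed

lemma G_spread:
  assumes B: "approx_family B"
  shows "E \<in> G B a \<Longrightarrow> strict_mono (f::nat\<Rightarrow>nat) \<Longrightarrow> f ` E \<in> G B a"
proof (induction a arbitrary: E rule: less_induct)
  case (less a)
  show ?case
  proof (cases a rule: ord_cases)
    case 1 then show ?thesis using less.prems by (auto simp add: G_zero)
  next
    case (2 b)
    from less.prems(1) 2 have "E = {} \<or> (\<exists>n E'. E = insert n E' \<and> E' \<in> G B b)"
      by (auto simp add: G_succ)
    then show ?thesis
    proof
      assume "E = {}" then show ?thesis using G_empty[OF B] by simp
    next
      assume "\<exists>n E'. E = insert n E' \<and> E' \<in> G B b"
      then obtain n E' where e: "E = insert n E'" "E' \<in> G B b" by blast
      have "f ` E' \<in> G B b" using less.IH[OF succ_less[OF 2] e(2) less.prems(2)] .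
      then show ?thesis using e 2 by (auto simp add: G_succ)
    qed
  next
    case 3
    show ?thesis
    proof (cases "E = {}")
      case True then show ?thesis using G_empty[OF B] by simp
    next
      case False
      then obtain \<beta> where b: "\<beta> \<in> B a (Min E)" "E \<in> G B \<beta>"
        using less.prems 3 by (auto simp add: G_lim[OF B])
      have fE: "finite E" using G_finite[OF B less.prems(1)] .
      have "f ` E \<in> G B \<beta>" using less.IH[OF B_sub[OF B 3 b(1)] b(2) less.prems(2)] .
      moreover have "Min (f ` E) = f (Min E)"
        using fE False less.prems(2) by (simp add: mono_Min_commute strict_mono_mono)
      moreover have "Min E \<le> f (Min E)" using less.prems(2) strict_mono_imp_increasing by blast
      then have "\<beta> \<in> B a (f (Min E))" using B_mono[OF B 3] b(1) by blast
      ultimately show ?thesis using 3 False by (auto simp add: G_lim[OF B])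
    qed
  qed
qed

lemma G_repl:
  assumes B: "approx_family B"
  shows "E \<in> G B a \<Longrightarrow> x \<in> E \<Longrightarrow> x < y \<Longrightarrow> insert y (E - {x}) \<in> G B a"
proof (induction a arbitrary: E rule: less_induct)
  case (less a)
  show ?case
  proof (cases a rule: ord_cases)
    case 1 then show ?thesis using less.prems by (auto simp add: G_zero)
  next
    case (2 b)
    from less.prems(1,2) 2 obtain n E' where e: "E = insert n E'" "E' \<in> G B b"
      by (auto simp add: G_succ)
    show ?thesis
    proof (cases "x = n")
      case True
      show ?thesis
      proof (cases "n \<in> E'")
        case True
        then have "insert y (E' - {x}) \<in> G B b"
          using less.IH[OF succ_less[OF 2] e(2) _ less.prems(3)] \<open>x = n\<close> by blast
        moreover have "insert y (E - {x}) = insert y (E' - {x})" using e True \<open>x = n\<close> by auto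
        ultimately show ?thesis using G_sub_succ[OF B 2] by auto
      next
        case False
        then have "insert y (E - {x}) = insert y E'" using e \<open>x = n\<close> by auto
        then show ?thesis using e 2 by (auto simp add: G_succ)
      qed
    next
      case False
      then have xE': "x \<in> E'" using e less.prems(2) by auto
      have "insert y (E' - {x}) \<in> G B b"
        using less.IH[OF succ_less[OF 2] e(2) xE' less.prems(3)] .
      moreover have "insert y (E - {x}) = insert n (insert y (E' - {x}))" using e False by auto
      ultimately show ?thesis using 2 by (auto simp add: G_succ)
    qed
  next
    case 3
    have En: "E \<noteq> {}" using less.prems by auto
    then obtain \<beta> where b: "\<beta> \<in> B a (Min E)" "E \<in> G B \<beta>"
      using less.prems 3 by (auto simp add: G_lim[OF B])
    have fE: "finite E" using G_finite[OF B less.prems(1)] .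
    have "insert y (E - {x}) \<in> G B \<beta>"
      using less.IH[OF B_sub[OF B 3 b(1)] b(2) less.prems(2,3)] .
    moreover have "Min E \<le> Min (insert y (E - {x}))"
    proof (subst Min_ge_iff)
      show "finite (insert y (E - {x}))" using fE by simp
      show "\<forall>a\<in>insert y (E - {x}). Min E \<le> a"
        using fE less.prems(3) Min_le[OF fE less.prems(2)] Min_le[OF fE] by fastforce
    qed simp
    then have "\<beta> \<in> B a (Min (insert y (E - {x})))" using B_mono[OF B 3] b(1) by blast
    ultimately show ?thesis using 3 by (auto simp add: G_lim[OF B])
  qed
qed

lemma G_succ_norm:
  assumes B: "approx_family B" and s: "is_succ_of a b" and E: "E \<in> G B a" "E \<noteq> {}"
  shows "E - {Min E} \<in> G B b"
proof -
  obtain n E' where e: "E = insert n E'" "E' \<in> G B b" using E s by (auto simp add: G_succ)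
  have fE: "finite E" using G_finite[OF B E(1)] .
  show ?thesis
  proof (cases "Min E = n")
    case True then show ?thesis using G_her[OF B e(2)] e by auto
  next
    case False
    then have m: "Min E \<in> E'" "Min E < n" using fE e Min_in[OF fE E(2)] Min_le[OF fE]
      by (auto simp add: le_less)
    have "insert n (E' - {Min E}) \<in> G B b" using G_repl[OF B e(2) m] .
    moreover have "E - {Min E} = insert n (E' - {Min E})" using e False by auto
    ultimately show ?thesis by simp
  qed
qed

lemma G_tail:
  assumes B: "approx_family B"
  shows "\<gamma> < \<delta> \<Longrightarrow> \<exists>n0. \<forall>E\<in>G B \<gamma>. (\<forall>x\<in>E. n0 \<le> x) \<longrightarrow> E \<in> G B \<delta>"
proof (induction \<delta> rule: less_induct)
  case (less \<delta>)
  show ?case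
  proof (cases \<delta> rule: ord_cases)
    case 1 then show ?thesis using less.prems ozero_le leD by blast
  next
    case (2 b)
    then have "\<gamma> \<le> b" using less.prems succ_less_iff by blast
    then show ?thesis
    proof (cases "\<gamma> = b")
      case True then show ?thesis using G_sub_succ[OF B 2] by blast
    next
      case False
      then obtain n0 where "\<forall>E\<in>G B \<gamma>. (\<forall>x\<in>E. n0 \<le> x) \<longrightarrow> E \<in> G B b"
        using less.IH[OF succ_less[OF 2]] \<open>\<gamma> \<le> b\<close> by fastforce
      then show ?thesis using G_sub_succ[OF B 2] by blast
    qed
  next
    case 3
    obtain N where N: "\<forall>n\<ge>N. B \<delta> n \<noteq> {} \<and> \<gamma> \<le> Max (B \<delta> n)"
      using B 3 less.prems unfolding approx_family_def by blast
    define \<eta> where "\<eta> = Max (B \<delta> N)"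
    have \<eta>: "\<eta> \<in> B \<delta> N" "\<gamma> \<le> \<eta>" using N B_fin[OF B 3] unfolding \<eta>_def by auto
    have \<eta>less: "\<eta> < \<delta>" using B_sub[OF B 3 \<eta>(1)] .
    obtain n1 where n1: "\<forall>E\<in>G B \<gamma>. (\<forall>x\<in>E. n1 \<le> x) \<longrightarrow> E \<in> G B \<eta>"
    proof (cases "\<gamma> = \<eta>")
      case True then show ?thesis using that by blast
    next
      case False then show ?thesis using that less.IH[OF \<eta>less] \<eta>(2) by fastforce
    qed
    have "\<forall>E\<in>G B \<gamma>. (\<forall>x\<in>E. max N n1 \<le> x) \<longrightarrow> E \<in> G B \<delta>"
    proof (intro ballI impI)
      fix E assume E: "E \<in> G B \<gamma>" "\<forall>x\<in>E. max N n1 \<le> x"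
      show "E \<in> G B \<delta>"
      proof (cases "E = {}")
        case True then show ?thesis using G_empty[OF B] by simp
      next
        case False
        have "E \<in> G B \<eta>" using n1 E by auto
        moreover have "N \<le> Min E" using E False G_finite[OF B E(1)] by auto
        then have "\<eta> \<in> B \<delta> (Min E)" using B_mono[OF B 3] \<eta>(1) by blast
        ultimately show ?thesis using False 3 by (auto simp add: G_lim[OF B])
      qed
    qed
    then show ?thesis by blast
  qed
qed

lemma enum_range:
  assumes f: "strict_mono (f::nat \<Rightarrow> nat)"
  shows "enumerate (range f) = f"
proof
  fix n
  have inf: "infinite (range f)"
    using f strict_mono_imp_inj_on range_inj_infinite by blast
  show "enumerate (range f) n = f n"
  proof (induction n)
    case 0
    show ?case unfolding enumerate_0
    proof (rule Least_equality)
      show "f 0 \<in> range f" by simp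
      fix x assume "x \<in> range f"
      then obtain k where "x = f k" by auto
      then show "f 0 \<le> x" using f by (simp add: strict_mono_less_eq)
    qed
  next
    case (Suc n)
    show ?case unfolding enumerate_Suc''[OF inf] Suc
    proof (rule Least_equality)
      show "f (Suc n) \<in> range f \<and> f n < f (Suc n)" using f by (simp add: strict_mono_def)
      fix x assume "x \<in> range f \<and> f n < x"
      then obtain k where "x = f k" "f n < f k" by auto
      then have "Suc n \<le> k" using f by (simp add: strict_mono_less)
      then show "f (Suc n) \<le> x" using f \<open>x = f k\<close> by (simp add: strict_mono_less_eq)
    qed
  qed
qed

lemma spread_range:
  "strict_mono (f::nat \<Rightarrow> nat) \<Longrightarrow> spread (range f) F = (\<lambda>E. f ` E) ` F"
  unfolding spread_def using enum_range by metis

lemma enum_sub_le: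
  assumes "infinite (S'::nat set)" "S' \<subseteq> S"
  shows "enumerate S j \<le> enumerate S' j"
proof (induction j)
  case 0
  show ?case unfolding enumerate_0
    using assms enumerate_in_set[OF assms(1), of 0] by (metis Least_le enumerate_0 subsetD)
next
  case (Suc j)
  have infS: "infinite S" using assms finite_subset by blast
  have "enumerate S' (Suc j) \<in> S \<and> enumerate S j < enumerate S' (Suc j)"
    using enumerate_in_set[OF assms(1)] assms(2) Suc enumerate_step[OF assms(1), of j] by auto
  then show ?case unfolding enumerate_Suc''[OF infS] by (rule Least_le)
qed

lemma spread_pow: "infinite S \<Longrightarrow> spread S F \<subseteq> Pow S"
  unfolding spread_def using enumerate_in_set by blast

lemma transfer:
  assumes B: "approx_family B" and S: "infinite S" and y: "strict_mono (y::nat\<Rightarrow>nat)"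
    and yS: "\<And>j. k \<le> j \<Longrightarrow> y j \<in> S \<and> enumerate S j \<le> y j"
    and E: "E \<in> G B a" and Ek: "\<forall>j\<in>E. k \<le> j"
  shows "y ` E \<in> spread S (G B a)"
proof -
  define \<phi> where "\<phi> j = (if j < k then j else (SOME p. enumerate S p = y j))" for j
  have ph: "enumerate S (\<phi> j) = y j" if "k \<le> j" for j
  proof -
    have "\<exists>p. enumerate S p = y j" using enumerate_Ex[OF S] yS[OF that] by blast
    then show ?thesis unfolding \<phi>_def using that by (auto intro: someI_ex)
  qed
  have "strict_mono \<phi>"
  proof (unfold strict_mono_Suc_iff, rule allI)
    fix j
    show "\<phi> j < \<phi> (Suc j)"
    proof (cases "Suc j < k")
      case True then show ?thesis unfolding \<phi>_def by auto
    next
      case False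
      note f = False
      show ?thesis
      proof (cases "j < k")
        case True
        then have "\<phi> j = j" unfolding \<phi>_def by simp
        moreover have "enumerate S (Suc j) \<le> enumerate S (\<phi> (Suc j))"
          using ph[of "Suc j"] yS[of "Suc j"] f by simp
        then have "Suc j \<le> \<phi> (Suc j)" using S by simp
        ultimately show ?thesis by simp
      next
        case False
        then have "enumerate S (\<phi> j) < enumerate S (\<phi> (Suc j))"
          using ph[of j] ph[of "Suc j"] y by (simp add: strict_mono_def)
        then show ?thesis using S by simp
      qed
    qed
  qed
  then have "\<phi> ` E \<in> G B a" using G_spread[OF B E] by blast
  moreover have "enumerate S ` (\<phi> ` E) = y ` E"
    using ph Ek by (auto simp add: image_image intro!: image_cong)
  ultimately show ?thesis unfolding spread_def by (metis image_eqI)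
qed

lemma spread_sub:
  assumes B: "approx_family B" and S: "infinite S" and S': "infinite S'" "S' \<subseteq> S"
  shows "spread S' (G B a) \<subseteq> spread S (G B a)"
proof
  fix X assume "X \<in> spread S' (G B a)"
  then obtain E where E: "E \<in> G B a" "X = enumerate S' ` E" unfolding spread_def by auto
  have "strict_mono (enumerate S')" using S'(1) by (simp add: strict_mono_def)
  moreover have "\<And>j. 0 \<le> j \<Longrightarrow> enumerate S' j \<in> S \<and> enumerate S j \<le> enumerate S' j"
    using enumerate_in_set[OF S'(1)] S'(2) enum_sub_le[OF S'] by auto
  ultimately show "X \<in> spread S (G B a)" using transfer[OF B S _ _ E(1), of _ 0] E(2) by auto
qed

section \<open>Fusion\<close>

lemma fusion:
  fixes \<Phi> :: "nat \<Rightarrow> nat \<Rightarrow> nat set \<Rightarrow> bool"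
  assumes S0: "infinite S0"
    and step: "\<And>k S. infinite S \<Longrightarrow> S \<subseteq> S0 \<Longrightarrow> \<exists>y S'. y \<in> S \<and> enumerate S k \<le> y \<and> S' \<subseteq> S \<and>
                   infinite S' \<and> (\<forall>z\<in>S'. y < z) \<and> \<Phi> k y S'"
  obtains S y where "S 0 = S0" "\<And>k. infinite (S k)" "\<And>k. S k \<subseteq> S0" "\<And>k. y k \<in> S k"
    "\<And>k. enumerate (S k) k \<le> y k" "\<And>k. S (Suc k) \<subseteq> S k" "\<And>k. \<forall>z\<in>S (Suc k). y k < z"
    "\<And>k. \<Phi> k (y k) (S (Suc k))"
proof -
  define P where "P k T p \<longleftrightarrow> fst p \<in> T \<and> enumerate T k \<le> fst p \<and> snd p \<subseteq> T \<and> infinite (snd p) \<and>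
                  (\<forall>z\<in>snd p. fst p < z) \<and> \<Phi> k (fst p) (snd p)" for k T p
  define ch where "ch k T = (SOME p. P k T p)" for k T
  have chP: "P k T (ch k T)" if a: "infinite T" "T \<subseteq> S0" for k T
  proof -
    obtain y S' where "y \<in> T \<and> enumerate T k \<le> y \<and> S' \<subseteq> T \<and> infinite S' \<and> (\<forall>z\<in>S'. y < z) \<and> \<Phi> k y S'"
      using step[OF a] by blast
    then have "P k T (y, S')" unfolding P_def by simp
    then show ?thesis unfolding ch_def by (rule someI)
  qed
  define S where "S = rec_nat S0 (\<lambda>k T. snd (ch k T))"
  have S0': "S 0 = S0" unfolding S_def by simp
  have SSuc: "S (Suc k) = snd (ch k (S k))" for k unfolding S_def by simp
  have inv: "infinite (S k) \<and> S k \<subseteq> S0" for k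
  proof (induction k)
    case 0 then show ?case using S0 S0' by simp
  next
    case (Suc k)
    then have "P k (S k) (ch k (S k))" using chP by blast
    then show ?case unfolding SSuc P_def using Suc by auto
  qed
  define y where "y k = fst (ch k (S k))" for k
  have Pk: "P k (S k) (ch k (S k))" for k using chP inv by blast
  show ?thesis
  proof (rule that[of S y])
    show "S 0 = S0" by (rule S0')
    show "infinite (S k)" for k using inv by blast
    show "S k \<subseteq> S0" for k using inv by blast
    show "y k \<in> S k" for k using Pk[of k] unfolding P_def y_def by blast
    show "enumerate (S k) k \<le> y k" for k using Pk[of k] unfolding P_def y_def by blast
    show "S (Suc k) \<subseteq> S k" for k using Pk[of k] unfolding P_def SSuc by blast
    show "\<forall>z\<in>S (Suc k). y k < z" for k using Pk[of k] unfolding P_def SSuc y_def by blast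
    show "\<Phi> k (y k) (S (Suc k))" for k using Pk[of k] unfolding P_def SSuc y_def by blast
  qed
qed

definition FUS :: "nat set \<Rightarrow> (nat \<Rightarrow> nat \<Rightarrow> nat set \<Rightarrow> bool) \<Rightarrow> (nat \<Rightarrow> nat set) \<Rightarrow> (nat \<Rightarrow> nat) \<Rightarrow> bool" where
  "FUS S0 \<Phi> S y \<longleftrightarrow> S 0 = S0 \<and> (\<forall>k. infinite (S k) \<and> S k \<subseteq> S0 \<and> y k \<in> S k \<and>
    enumerate (S k) k \<le> y k \<and> S (Suc k) \<subseteq> S k \<and> (\<forall>z\<in>S (Suc k). y k < z) \<and> \<Phi> k (y k) (S (Suc k)))"

lemma fusion_ex:
  fixes \<Phi> :: "nat \<Rightarrow> nat \<Rightarrow> nat set \<Rightarrow> bool"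
  assumes S0: "infinite S0"
    and step: "\<And>k S. infinite S \<Longrightarrow> S \<subseteq> S0 \<Longrightarrow> \<exists>y S'. y \<in> S \<and> enumerate S k \<le> y \<and> S' \<subseteq> S \<and>
                   infinite S' \<and> (\<forall>z\<in>S'. y < z) \<and> \<Phi> k y S'"
  shows "\<exists>S y. FUS S0 \<Phi> S y"
proof (rule fusion[OF S0 step])
  fix S y
  assume "S 0 = S0" "\<And>k. infinite (S k)" "\<And>k. S k \<subseteq> S0" "\<And>k. y k \<in> S k"
    "\<And>k. enumerate (S k) k \<le> y k" "\<And>k. S (Suc k) \<subseteq> S k" "\<And>k. \<forall>z\<in>S (Suc k). y k < z"
    "\<And>k. \<Phi> k (y k) (S (Suc k))"
  then have "FUS S0 \<Phi> S y" unfolding FUS_def by simp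
  then show ?thesis by blast
qed auto

lemma FUS_D:
  assumes "FUS S0 \<Phi> S y"
  shows "S 0 = S0" "\<And>k. infinite (S k)" "\<And>k. S k \<subseteq> S0" "\<And>k. y k \<in> S k"
    "\<And>k. enumerate (S k) k \<le> y k" "\<And>k. S (Suc k) \<subseteq> S k" "\<And>k. \<forall>z\<in>S (Suc k). y k < z"
    "\<And>k. \<Phi> k (y k) (S (Suc k))"
  using assms unfolding FUS_def by auto

lemma fusion_props:
  fixes y :: "nat \<Rightarrow> nat" and S :: "nat \<Rightarrow> nat set"
  assumes inf: "\<And>k. infinite (S k)" and yin: "\<And>k. y k \<in> S k"
    and ye: "\<And>k. enumerate (S k) k \<le> y k" and Sd: "\<And>k. S (Suc k) \<subseteq> S k"
    and yl: "\<And>k. \<forall>z\<in>S (Suc k). y k < z"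
  shows "strict_mono y" and "\<And>k j. k \<le> j \<Longrightarrow> S j \<subseteq> S k"
    and "\<And>k j. k \<le> j \<Longrightarrow> y j \<in> S k \<and> enumerate (S k) j \<le> y j"
proof -
  show "strict_mono y"
    unfolding strict_mono_Suc_iff using yin yl by blast
  show anti: "\<And>k j. k \<le> j \<Longrightarrow> S j \<subseteq> S k"
    using lift_Suc_antimono_le[of S] Sd by blast
  fix k j :: nat assume kj: "k \<le> j"
  have "y j \<in> S k" using anti[OF kj] yin by blast
  moreover have "enumerate (S k) j \<le> enumerate (S j) j" using enum_sub_le[OF inf anti[OF kj]] .
  ultimately show "y j \<in> S k \<and> enumerate (S k) j \<le> y j" using ye[of j] by simp
qed

section \<open>Rank\<close>

definition link :: "nat set set \<Rightarrow> nat \<Rightarrow> nat set set" where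
  "link F n = {E. (\<forall>x\<in>E. n < x) \<and> insert n E \<in> F}"

inductive rkle :: "nat set set \<Rightarrow> 'a::wellorder \<Rightarrow> bool" where
  rkI: "(\<forall>n. {n} \<in> F \<longrightarrow> (\<exists>\<gamma><\<beta>. rkle (link F n) \<gamma>)) \<Longrightarrow> rkle F \<beta>"

lemma link_mono: "F' \<subseteq> F \<Longrightarrow> link F' n \<subseteq> link F n"
  unfolding link_def by auto

lemma rkle_anti: "rkle F \<beta> \<Longrightarrow> F' \<subseteq> F \<Longrightarrow> rkle F' \<beta>"
proof (induction arbitrary: F' rule: rkle.induct)
  case (rkI F \<beta>)
  show ?case
  proof (rule rkle.rkI, intro allI impI)
    fix n assume "{n} \<in> F'"
    then have "{n} \<in> F" using rkI.prems by blast
    then obtain \<gamma> where "\<gamma> < \<beta>" "\<forall>F''. F'' \<subseteq> link F n \<longrightarrow> rkle F'' \<gamma>" using rkI.IH by blast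
    then show "\<exists>\<gamma><\<beta>. rkle (link F' n) \<gamma>" using link_mono[OF rkI.prems] by blast
  qed
qed

lemma rkle_mono:
  assumes "rkle F \<beta>" "\<beta> \<le> \<beta>'" shows "rkle F \<beta>'"
proof -
  have "\<forall>n. {n} \<in> F \<longrightarrow> (\<exists>\<gamma><\<beta>. rkle (link F n) \<gamma>)" using assms(1) by (cases rule: rkle.cases) blast
  then have "\<forall>n. {n} \<in> F \<longrightarrow> (\<exists>\<gamma><\<beta>'. rkle (link F n) \<gamma>)" using assms(2) by (meson order.strict_trans2)
  then show ?thesis by (rule rkle.rkI)
qed

lemma rkle_D: "rkle F \<beta> \<Longrightarrow> {n} \<in> F \<Longrightarrow> \<exists>\<gamma><\<beta>. rkle (link F n) \<gamma>"
  by (erule rkle.cases) blast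

section \<open>Lower bound on rank of spreads of G\<close>

lemma LB:
  assumes B: "approx_family (B::'a::wellorder \<Rightarrow> nat \<Rightarrow> 'a set)" and nm: "\<And>x::'a. \<exists>y. x < y"
  shows "infinite N \<Longrightarrow> rkle (spread N (G B \<alpha>)) (\<gamma>::'a) \<Longrightarrow> \<alpha> \<le> \<gamma>"
proof (induction \<alpha> arbitrary: N \<gamma> rule: less_induct)
  case (less a)
  have sm: "strict_mono (enumerate N)" using less.prems(1) by (simp add: strict_mono_def)
  show ?case
  proof (cases a rule: ord_cases)
    case 1 then show ?thesis using ozero_le by simp
  next
    case (2 b)
    define f where "f j = enumerate N (Suc j)" for j
    have fsm: "strict_mono f" using sm unfolding f_def strict_mono_def by simp
    have sub: "spread (range f) (G B b) \<subseteq> link (spread N (G B a)) (enumerate N 0)"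
    proof
      fix X assume "X \<in> spread (range f) (G B b)"
      then obtain E where E: "E \<in> G B b" "X = f ` E" using spread_range[OF fsm] by auto
      have "Suc ` E \<in> G B b" using G_spread[OF B E(1)] strict_mono_Suc_iff by auto
      then have "insert 0 (Suc ` E) \<in> G B a" using 2 by (auto simp add: G_succ)
      moreover have "enumerate N ` (insert 0 (Suc ` E)) = insert (enumerate N 0) X"
        using E(2) unfolding f_def by (auto simp add: image_image)
      ultimately have "insert (enumerate N 0) X \<in> spread N (G B a)" unfolding spread_def by (metis image_eqI)
      moreover have "\<forall>x\<in>X. enumerate N 0 < x" using E(2) sm unfolding f_def by (auto simp add: strict_mono_def)
      ultimately show "X \<in> link (spread N (G B a)) (enumerate N 0)" unfolding link_def by simp
    qed
    have "{0} \<in> G B a" using 2 G_empty[OF B] by (auto simp add: G_succ)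
    then have "{enumerate N 0} \<in> spread N (G B a)" unfolding spread_def by (metis image_empty image_eqI image_insert)
    then obtain \<gamma>' where g: "\<gamma>' < \<gamma>" "rkle (link (spread N (G B a)) (enumerate N 0)) \<gamma>'"
      using rkle_D[OF less.prems(2)] by blast
    have "rkle (spread (range f) (G B b)) \<gamma>'" using rkle_anti[OF g(2) sub] .
    moreover have "infinite (range f)" using fsm strict_mono_imp_inj_on range_inj_infinite by blast
    ultimately have "b \<le> \<gamma>'" using less.IH[OF succ_less[OF 2]] by blast
    then have "b < \<gamma>" using g(1) by simp
    then show ?thesis using 2 unfolding is_succ_of_def by blast
  next
    case 3
    show ?thesis
    proof (rule ccontr)
      assume "\<not> a \<le> \<gamma>"
      then have ga: "\<gamma> < a" by simp
      define \<beta> where "\<beta> = osucc \<gamma>"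
      have ba: "\<beta> < a" unfolding \<beta>_def using limit_succ_less[OF 3 ga nm] .
      have gb: "\<gamma> < \<beta>" unfolding \<beta>_def using osucc_is_succ[OF nm] succ_less by blast
      obtain n0 where n0: "\<forall>E\<in>G B \<beta>. (\<forall>x\<in>E. n0 \<le> x) \<longrightarrow> E \<in> G B a" using G_tail[OF B ba] by blast
      define f where "f j = enumerate N (j + n0)" for j
      have fsm: "strict_mono f" using sm unfolding f_def strict_mono_def by simp
      have sub: "spread (range f) (G B \<beta>) \<subseteq> spread N (G B a)"
      proof
        fix X assume "X \<in> spread (range f) (G B \<beta>)"
        then obtain E where E: "E \<in> G B \<beta>" "X = f ` E" using spread_range[OF fsm] by auto
        have "strict_mono (\<lambda>j::nat. j + n0)" by (simp add: strict_mono_def)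
        then have "(\<lambda>j. j + n0) ` E \<in> G B \<beta>" using G_spread[OF B E(1)] by blast
        then have "(\<lambda>j. j + n0) ` E \<in> G B a" using n0 by auto
        moreover have "X = enumerate N ` ((\<lambda>j. j + n0) ` E)" using E(2) unfolding f_def by (auto simp add: image_image)
        ultimately show "X \<in> spread N (G B a)" unfolding spread_def by blast
      qed
      have "rkle (spread (range f) (G B \<beta>)) \<gamma>" using rkle_anti[OF less.prems(2) sub] .
      moreover have "infinite (range f)" using fsm strict_mono_imp_inj_on range_inj_infinite by blast
      ultimately have "\<beta> \<le> \<gamma>" using less.IH[OF ba] by blast
      then show False using gb by simp
    qed
  qed
qed

section \<open>The Ramsey-type lemma\<close>

lemma inf_tail: "infinite (S::nat set) \<Longrightarrow> infinite {z\<in>S. y < z}"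
proof
  assume "infinite S" "finite {z\<in>S. y < z}"
  moreover have "S \<subseteq> {z\<in>S. y < z} \<union> {..y}" by auto
  ultimately show False using finite_subset by blast
qed

lemma link_her:
  assumes "hereditary A" shows "hereditary (link A y)"
  unfolding hereditary_def
proof (intro ballI allI impI)
  fix E F assume E: "E \<in> link A y" and F: "F \<subseteq> E"
  then have "insert y F \<subseteq> insert y E" "insert y E \<in> A" "\<forall>x\<in>E. y < x" unfolding link_def by auto
  then have "insert y F \<in> A" "\<forall>x\<in>F. y < x" using assms F unfolding hereditary_def by blast+
  then show "F \<in> link A y" unfolding link_def by simp
qed

lemma refine:
  assumes fin: "finite Bs"
    and each: "\<And>\<beta> T. \<beta> \<in> Bs \<Longrightarrow> T \<subseteq> M \<Longrightarrow> infinite T \<Longrightarrow> \<exists>N. N \<subseteq> T \<and> infinite N \<and> spread N (G B \<beta>) \<subseteq> A"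
    and B: "approx_family B"
  shows "T \<subseteq> M \<Longrightarrow> infinite T \<Longrightarrow> \<exists>N. N \<subseteq> T \<and> infinite N \<and> (\<forall>\<beta>\<in>Bs. spread N (G B \<beta>) \<subseteq> A)"
proof -
  have "\<forall>T. T \<subseteq> M \<and> infinite T \<longrightarrow> (\<exists>N. N \<subseteq> T \<and> infinite N \<and> (\<forall>\<beta>\<in>C. spread N (G B \<beta>) \<subseteq> A))"
    if "finite C" "C \<subseteq> Bs" for C
    using that
  proof (induction C rule: finite_induct)
    case empty then show ?case by blast
  next
    case (insert \<beta> C)
    show ?case
    proof (intro allI impI)
      fix T assume T: "T \<subseteq> M \<and> infinite T"
      have "C \<subseteq> Bs" using insert.prems by simp
      then have "\<exists>N. N \<subseteq> T \<and> infinite N \<and> (\<forall>\<beta>\<in>C. spread N (G B \<beta>) \<subseteq> A)"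
        using insert.IH T by simp
      then obtain N1 where N1: "N1 \<subseteq> T" "infinite N1" "\<forall>\<beta>\<in>C. spread N1 (G B \<beta>) \<subseteq> A"
        by auto
      have "\<beta> \<in> Bs" using insert.prems by simp
      moreover have "N1 \<subseteq> M" using N1 T by blast
      ultimately have "\<exists>N. N \<subseteq> N1 \<and> infinite N \<and> spread N (G B \<beta>) \<subseteq> A"
        using each[of \<beta> N1] N1(2) by simp
      then obtain N2 where N2: "N2 \<subseteq> N1" "infinite N2" "spread N2 (G B \<beta>) \<subseteq> A"
        by auto
      have "\<forall>\<beta>'\<in>C. spread N2 (G B \<beta>') \<subseteq> A"
        using N1(3) spread_sub[OF B N1(2) N2(2,1)] by blast
      then have "\<forall>\<beta>'\<in>insert \<beta> C. spread N2 (G B \<beta>') \<subseteq> A" using N2(3) by simp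
      then show "\<exists>N. N \<subseteq> T \<and> infinite N \<and> (\<forall>\<beta>'\<in>insert \<beta> C. spread N (G B \<beta>') \<subseteq> A)"
        using N1(1) N2(1,2) by (meson order_trans)
    qed
  qed
  then show "T \<subseteq> M \<Longrightarrow> infinite T \<Longrightarrow> \<exists>N. N \<subseteq> T \<and> infinite N \<and> (\<forall>\<beta>\<in>Bs. spread N (G B \<beta>) \<subseteq> A)"
    using fin by simp
qed

lemma Rlem:
  assumes B: "approx_family (B::'a::wellorder \<Rightarrow> nat \<Rightarrow> 'a set)"
  shows "hereditary A \<Longrightarrow> {} \<in> A \<Longrightarrow> infinite M \<Longrightarrow>
    (\<forall>L. L \<subseteq> M \<and> infinite L \<longrightarrow> (\<forall>\<gamma><\<alpha>. \<not> rkle (A \<inter> Pow L) \<gamma>)) \<Longrightarrow>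
    \<exists>N. N \<subseteq> M \<and> infinite N \<and> spread N (G B \<alpha>) \<subseteq> A"
proof (induction \<alpha> arbitrary: A M rule: less_induct)
  case (less a)
  note her = less.prems(1) and emp = less.prems(2) and infM = less.prems(3) and H = less.prems(4)
  show ?case
  proof (cases a rule: ord_cases)
    case 1
    then have "spread M (G B a) \<subseteq> A" using emp unfolding spread_def by (simp add: G_zero)
    then show ?thesis using infM by blast
  next
    case (2 b)
    have ba: "b < a" using succ_less[OF 2] .
    define acc where "acc y T \<longleftrightarrow> (\<forall>L. L \<subseteq> T \<and> infinite L \<longrightarrow> (\<forall>\<gamma><b. \<not> rkle (link A y \<inter> Pow L) \<gamma>))" for y T
    define \<Phi>1 where "\<Phi>1 k y S' \<longleftrightarrow> acc y S' \<or> (\<exists>\<gamma><b. rkle (link A y \<inter> Pow S') \<gamma>)" for k :: nat and y S'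
    have step1: "\<exists>y S'. y \<in> S \<and> enumerate S k \<le> y \<and> S' \<subseteq> S \<and> infinite S' \<and> (\<forall>z\<in>S'. y < z) \<and> \<Phi>1 k y S'"
      if "infinite S" "S \<subseteq> M" for k S
    proof -
      define y where "y = enumerate S k"
      define T where "T = {z\<in>S. y < z}"
      have T: "infinite T" "T \<subseteq> S" "\<forall>z\<in>T. y < z" unfolding T_def using inf_tail[OF that(1)] by auto
      have y: "y \<in> S" "enumerate S k \<le> y" unfolding y_def using enumerate_in_set[OF that(1)] by auto
      show ?thesis
      proof (cases "acc y T")
        case True then show ?thesis using T y unfolding \<Phi>1_def by blast
      next
        case False
        then obtain L \<gamma> where L: "L \<subseteq> T" "infinite L" "\<gamma> < b" "rkle (link A y \<inter> Pow L) \<gamma>"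
          unfolding acc_def by blast
        have "L \<subseteq> S" "\<forall>z\<in>L. y < z" using L(1) T by auto
        then show ?thesis using L(2,3,4) y unfolding \<Phi>1_def by blast
      qed
    qed
    have "\<exists>S y. FUS M \<Phi>1 S y" by (rule fusion_ex[OF infM], rule step1)
    then obtain S1 y1 where fus_f1: "FUS M \<Phi>1 S1 y1" by blast
    note f1 = FUS_D[OF fus_f1]
    note fp1 = fusion_props[OF f1(2,4,5,6,7)]
    have y1later: "y1 j \<in> S1 (Suc k)" if "y1 k < y1 j" for k j
    proof -
      have "Suc k \<le> j" using that fp1(1) by (simp add: strict_mono_less Suc_le_eq)
      then show ?thesis using fp1(3) by blast
    qed
    define bad where "bad k \<longleftrightarrow> {y1 k} \<notin> A \<or> \<not> acc (y1 k) (S1 (Suc k))" for k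
    have injy1: "inj y1" using fp1(1) strict_mono_imp_inj_on by blast
    have "finite {k. bad k}"
    proof (rule ccontr)
      assume inf: "infinite {k. bad k}"
      define R where "R = y1 ` {k. bad k}"
      have R: "R \<subseteq> M" "infinite R" unfolding R_def using f1(3,4) inf injy1
        by (auto simp add: finite_image_iff inj_on_subset)
      have "rkle (A \<inter> Pow R) b"
      proof (rule rkle.rkI, intro allI impI)
        fix n assume n: "{n} \<in> A \<inter> Pow R"
        then obtain k where k: "n = y1 k" "bad k" unfolding R_def by auto
        then have "\<not> acc (y1 k) (S1 (Suc k))" using n unfolding bad_def by auto
        then obtain \<gamma> where g: "\<gamma> < b" "rkle (link A n \<inter> Pow (S1 (Suc k))) \<gamma>"
          using f1(8)[of k] k unfolding \<Phi>1_def by blast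
        have "link (A \<inter> Pow R) n \<subseteq> link A n \<inter> Pow (S1 (Suc k))"
        proof
          fix E assume "E \<in> link (A \<inter> Pow R) n"
          then have E: "\<forall>x\<in>E. n < x" "insert n E \<in> A" "insert n E \<subseteq> R" unfolding link_def by auto
          have "E \<subseteq> S1 (Suc k)"
          proof
            fix x assume "x \<in> E"
            then obtain j where "x = y1 j" "y1 k < y1 j" using E k unfolding R_def by auto
            then show "x \<in> S1 (Suc k)" using y1later by blast
          qed
          then show "E \<in> link A n \<inter> Pow (S1 (Suc k))" using E unfolding link_def by auto
        qed
        then show "\<exists>\<gamma><b. rkle (link (A \<inter> Pow R) n) \<gamma>" using g rkle_anti by blast
      qed
      then show False using H R ba by blast
    qed
    define X where "X = y1 ` {k. \<not> bad k}"
    have infX: "infinite X"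
    proof -
      have e: "{k. \<not> bad k} = UNIV - {k. bad k}" by auto
      have "infinite {k. \<not> bad k}"
        unfolding e using \<open>finite {k. bad k}\<close> infinite_UNIV_nat by (rule Diff_infinite_finite)
      then show ?thesis unfolding X_def using injy1 finite_imageD inj_on_subset by blast
    qed
    have XM: "X \<subseteq> M" unfolding X_def using f1(3,4) by blast
    define \<Phi>2 where "\<Phi>2 k y S' \<longleftrightarrow> y \<in> X \<and> spread S' (G B b) \<subseteq> link A y" for k :: nat and y S'
    have step2: "\<exists>y S'. y \<in> S \<and> enumerate S k \<le> y \<and> S' \<subseteq> S \<and> infinite S' \<and> (\<forall>z\<in>S'. y < z) \<and> \<Phi>2 k y S'"
      if a2: "infinite S" "S \<subseteq> X" for k S
    proof -
      define y where "y = enumerate S k"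
      define T where "T = {z\<in>S. y < z}"
      have T: "infinite T" "T \<subseteq> S" "\<forall>z\<in>T. y < z" unfolding T_def using inf_tail[OF a2(1)] by auto
      have y: "y \<in> S" "enumerate S k \<le> y" unfolding y_def using enumerate_in_set[OF a2(1)] by auto
      then obtain k0 where k0: "y = y1 k0" "\<not> bad k0" using a2(2) unfolding X_def by auto
      have TS1: "T \<subseteq> S1 (Suc k0)"
      proof
        fix z assume "z \<in> T"
        then have "z \<in> X" "y < z" using T a2(2) by auto
        then obtain j where "z = y1 j" "y1 k0 < y1 j" unfolding X_def using k0 by auto
        then show "z \<in> S1 (Suc k0)" using y1later by blast
      qed
      have hyp: "\<forall>L. L \<subseteq> T \<and> infinite L \<longrightarrow> (\<forall>\<gamma><b. \<not> rkle (link A y \<inter> Pow L) \<gamma>)"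
        using k0 TS1 unfolding bad_def acc_def by blast
      have "{} \<in> link A y" using k0 unfolding bad_def link_def by auto
      then obtain N where N: "N \<subseteq> T" "infinite N" "spread N (G B b) \<subseteq> link A y"
        using less.IH[OF ba link_her[OF her] _ T(1) hyp] by blast
      show ?thesis
        apply (rule exI[of _ y], rule exI[of _ N])
        using N T y a2(2) unfolding \<Phi>2_def by auto
    qed
    have "\<exists>S y. FUS X \<Phi>2 S y" by (rule fusion_ex[OF infX], rule step2)
    then obtain S2 y2 where fus_f2: "FUS X \<Phi>2 S2 y2" by blast
    note f2 = FUS_D[OF fus_f2]
    note fp2 = fusion_props[OF f2(2,4,5,6,7)]
    have NM: "range y2 \<subseteq> M" using f2(3,4) XM by blast
    have infN: "infinite (range y2)" using fp2(1) strict_mono_imp_inj_on range_inj_infinite by blast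
    have "spread (range y2) (G B a) \<subseteq> A"
    proof
      fix Y assume "Y \<in> spread (range y2) (G B a)"
      then obtain E where E: "E \<in> G B a" "Y = y2 ` E" using spread_range[OF fp2(1)] by auto
      show "Y \<in> A"
      proof (cases "E = {}")
        case True then show ?thesis using E emp by simp
      next
        case False
        define m where "m = Min E"
        have fE: "finite E" using G_finite[OF B E(1)] .
        have E': "E - {m} \<in> G B b" unfolding m_def using G_succ_norm[OF B 2 E(1) False] .
        have mE: "m \<in> E" unfolding m_def using Min_in[OF fE False] .
        have ge: "\<forall>j\<in>E - {m}. Suc m \<le> j" unfolding m_def using fE Min_le[OF fE]
          by (metis Diff_iff Suc_le_eq le_neq_implies_less singletonI)
        have "y2 ` (E - {m}) \<in> spread (S2 (Suc m)) (G B b)"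
          using transfer[OF B f2(2) fp2(1) _ E' ge] fp2(3) by blast
        then have "y2 ` (E - {m}) \<in> link A (y2 m)" using f2(8)[of m] unfolding \<Phi>2_def by blast
        then have "insert (y2 m) (y2 ` (E - {m})) \<in> A" unfolding link_def by blast
        moreover have "insert (y2 m) (y2 ` (E - {m})) = Y" using E(2) mE by auto
        ultimately show ?thesis by simp
      qed
    qed
    then show ?thesis using NM infN by blast
  next
    case 3
    have each: "\<exists>N. N \<subseteq> T \<and> infinite N \<and> spread N (G B \<beta>) \<subseteq> A"
      if "\<beta> \<in> B a n" "T \<subseteq> M" "infinite T" for \<beta> T n
    proof -
      have ba: "\<beta> < a" using B_sub[OF B 3 that(1)] .
      have "\<forall>L. L \<subseteq> T \<and> infinite L \<longrightarrow> (\<forall>\<gamma><\<beta>. \<not> rkle (A \<inter> Pow L) \<gamma>)"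
      proof (intro allI impI)
        fix L \<gamma> assume L: "L \<subseteq> T \<and> infinite L" and g: "\<gamma> < \<beta>"
        have "L \<subseteq> M" using L that(2) by blast
        moreover have "\<gamma> < a" using g ba by simp
        ultimately show "\<not> rkle (A \<inter> Pow L) \<gamma>" using H L by blast
      qed
      then show ?thesis using less.IH[OF ba her emp that(3)] by blast
    qed
    have ref: "\<exists>N. N \<subseteq> T \<and> infinite N \<and> (\<forall>\<beta>\<in>B a n. spread N (G B \<beta>) \<subseteq> A)"
      if "T \<subseteq> M" "infinite T" for T n
      using refine[OF B_fin[OF B 3] each B that] by simp
    have "\<exists>N. N \<subseteq> M \<and> infinite N \<and> (\<forall>\<beta>\<in>B a 0. spread N (G B \<beta>) \<subseteq> A)"
      using ref[OF subset_refl infM] by simp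
    then obtain S0 where S0: "S0 \<subseteq> M" "infinite S0" "\<forall>\<beta>\<in>B a 0. spread S0 (G B \<beta>) \<subseteq> A"
      by auto
    define \<Phi> where "\<Phi> k y S' \<longleftrightarrow> (\<forall>\<beta>\<in>B a (Suc k). spread S' (G B \<beta>) \<subseteq> A)" for k :: nat and y :: nat and S'
    have step: "\<exists>y S'. y \<in> S \<and> enumerate S k \<le> y \<and> S' \<subseteq> S \<and> infinite S' \<and> (\<forall>z\<in>S'. y < z) \<and> \<Phi> k y S'"
      if a3: "infinite S" "S \<subseteq> S0" for k S
    proof -
      define y where "y = enumerate S k"
      define T where "T = {z\<in>S. y < z}"
      have T: "infinite T" "T \<subseteq> S" "\<forall>z\<in>T. y < z" unfolding T_def using inf_tail[OF a3(1)] by auto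
      have y: "y \<in> S" "enumerate S k \<le> y" unfolding y_def using enumerate_in_set[OF a3(1)] by auto
      have "T \<subseteq> M" using T(2) a3(2) S0(1) by blast
      then have "\<exists>N. N \<subseteq> T \<and> infinite N \<and> (\<forall>\<beta>\<in>B a (Suc k). spread N (G B \<beta>) \<subseteq> A)"
        using ref[of T "Suc k"] T(1) by simp
      then obtain N where N: "N \<subseteq> T" "infinite N" "\<forall>\<beta>\<in>B a (Suc k). spread N (G B \<beta>) \<subseteq> A"
        by auto
      have "N \<subseteq> S" "\<forall>z\<in>N. y < z" using N(1) T by auto
      then show ?thesis
        apply (rule_tac exI[of _ y], rule_tac exI[of _ N])
        using N y unfolding \<Phi>_def by simp
    qed
    have "\<exists>S y. FUS S0 \<Phi> S y" by (rule fusion_ex[OF S0(2)], rule step)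
    then obtain S y where fus_f: "FUS S0 \<Phi> S y" by blast
    note f = FUS_D[OF fus_f]
    note fp = fusion_props[OF f(2,4,5,6,7)]
    have Psi: "\<forall>\<beta>\<in>B a k. spread (S k) (G B \<beta>) \<subseteq> A" for k
    proof (cases k)
      case 0 then show ?thesis using S0 f(1) by simp
    next
      case (Suc k') then show ?thesis using f(8)[of k'] unfolding \<Phi>_def by simp
    qed
    have NM: "range y \<subseteq> M" using f(3,4) S0(1) by blast
    have infN: "infinite (range y)" using fp(1) strict_mono_imp_inj_on range_inj_infinite by blast
    have "spread (range y) (G B a) \<subseteq> A"
    proof
      fix Y assume "Y \<in> spread (range y) (G B a)"
      then obtain E where E: "E \<in> G B a" "Y = y ` E" using spread_range[OF fp(1)] by auto
      show "Y \<in> A"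
      proof (cases "E = {}")
        case True then show ?thesis using E emp by simp
      next
        case False
        then obtain \<beta> where b: "\<beta> \<in> B a (Min E)" "E \<in> G B \<beta>" using E(1) 3 by (auto simp add: G_lim[OF B])
        have fE: "finite E" using G_finite[OF B E(1)] .
        have ge: "\<forall>j\<in>E. Min E \<le> j" using Min_le[OF fE] by blast
        have "y ` E \<in> spread (S (Min E)) (G B \<beta>)"
          using transfer[OF B f(2) fp(1) _ b(2) ge] fp(3) by blast
        then show ?thesis using Psi b(1) E(2) by blast
      qed
    qed
    then show ?thesis using NM infN by blast
  qed
qed

section \<open>Construction of the approximating family\<close>

definition Ft :: "nat set set \<Rightarrow> nat set \<Rightarrow> nat set set" where
  "Ft F t = {E. (\<forall>x\<in>E. \<forall>y\<in>t. y < x) \<and> t \<union> E \<in> F}"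

definition rho :: "nat set set \<Rightarrow> nat set \<Rightarrow> 'a::wellorder" where
  "rho F t = (LEAST \<gamma>. rkle (Ft F t) \<gamma>)"

definition Req :: "nat set set \<Rightarrow> 'a::wellorder \<Rightarrow> nat \<Rightarrow> 'a set" where
  "Req F l m = ((\<lambda>t. osucc (rho F t)) ` {t. t \<subseteq> {0..m} \<and> m \<in> t}) \<inter> {..<l}"

definition Bc :: "nat set set \<Rightarrow> 'a::wellorder \<Rightarrow> nat \<Rightarrow> 'a set" where
  "Bc F l n = (if is_limit l then (\<Union>m\<in>{0..n}. Req F l m) \<union> from_nat_into {..<l} ` {0..n} else {})"

lemma Bc_approx:
  assumes seg: "\<forall>\<alpha>::'a::wellorder. countable {..<\<alpha>}"
  shows "approx_family (Bc F :: 'a \<Rightarrow> nat \<Rightarrow> 'a set)"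
  unfolding approx_family_def
proof (intro allI impI)
  fix l :: 'a assume l: "is_limit l"
  have ne: "{..<l} \<noteq> {}" using limit_pos[OF l] by auto
  have finReq: "finite (Req F l m)" for m
  proof -
    have "finite {t. t \<subseteq> {0..m} \<and> m \<in> t}" by (rule finite_subset[of _ "Pow {0..m}"]) auto
    then show ?thesis unfolding Req_def by simp
  qed
  have finB: "finite (Bc F l n)" for n unfolding Bc_def using l finReq by simp
  have p1: "\<forall>n. finite (Bc F l n) \<and> Bc F l n \<subseteq> {..<l} \<and> Bc F l n \<subseteq> Bc F l (Suc n)"
  proof
    fix n
    have a1: "Bc F l n \<subseteq> {..<l}"
      using l from_nat_into[OF ne] unfolding Bc_def Req_def by auto
    have u1: "(\<Union>m\<in>{0..n}. Req F l m) \<subseteq> (\<Union>m\<in>{0..Suc n}. Req F l m)" by (rule UN_mono) auto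
    have u2: "from_nat_into {..<l} ` {0..n} \<subseteq> from_nat_into {..<l} ` {0..Suc n}" by (rule image_mono) auto
    have a2: "Bc F l n \<subseteq> Bc F l (Suc n)" unfolding Bc_def using l u1 u2 by auto
    show "finite (Bc F l n) \<and> Bc F l n \<subseteq> {..<l} \<and> Bc F l n \<subseteq> Bc F l (Suc n)"
      using finB[of n] a1 a2 by simp
  qed
  have p2: "\<forall>\<beta><l. \<exists>N. \<forall>n\<ge>N. Bc F l n \<noteq> {} \<and> \<beta> \<le> Max (Bc F l n)"
  proof (intro allI impI)
    fix \<beta> assume "\<beta> < l"
    then have "\<beta> \<in> range (from_nat_into {..<l})" using range_from_nat_into[OF ne] seg by auto
    then obtain k where k: "\<beta> = from_nat_into {..<l} k" by auto
    have "\<forall>n\<ge>k. Bc F l n \<noteq> {} \<and> \<beta> \<le> Max (Bc F l n)"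
    proof (intro allI impI)
      fix n assume "k \<le> n"
      then have bin: "\<beta> \<in> Bc F l n" unfolding Bc_def using l k by auto
      then show "Bc F l n \<noteq> {} \<and> \<beta> \<le> Max (Bc F l n)" using finB[of n] by auto
    qed
    then show "\<exists>N. \<forall>n\<ge>N. Bc F l n \<noteq> {} \<and> \<beta> \<le> Max (Bc F l n)" by blast
  qed
  show "(\<forall>n. finite (Bc F l n) \<and> Bc F l n \<subseteq> {..<l} \<and> Bc F l n \<subseteq> Bc F l (Suc n)) \<and>
        (\<forall>\<beta><l. \<exists>N. \<forall>n\<ge>N. Bc F l n \<noteq> {} \<and> \<beta> \<le> Max (Bc F l n))"
    using p1 p2 by blast
qed

lemma LC:
  assumes her: "hereditary F" and finF: "\<forall>E\<in>F. finite E"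
    and nm: "\<And>x::'a::wellorder. \<exists>y. x < y"
    and seg: "\<forall>\<alpha>::'a. countable {..<\<alpha>}"
  shows "rkle (Ft F t) (\<beta>::'a) \<Longrightarrow> Ft F t \<subseteq> G (Bc F) \<beta>"
proof (induction \<beta> arbitrary: t rule: less_induct)
  case (less \<beta>)
  have B: "approx_family (Bc F :: 'a \<Rightarrow> nat \<Rightarrow> 'a set)" using Bc_approx[OF seg] .
  show ?case
  proof
    fix E assume E: "E \<in> Ft F t"
    show "E \<in> G (Bc F) \<beta>"
    proof (cases "E = {}")
      case True then show ?thesis using G_empty[OF B] by simp
    next
      case False
      have Et: "\<forall>x\<in>E. \<forall>y\<in>t. y < x" "t \<union> E \<in> F" using E unfolding Ft_def by auto
      have fE: "finite E" using finF Et(2) by (meson finite_Un)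
      define n where "n = Min E"
      have nE: "n \<in> E" unfolding n_def using Min_in[OF fE False] .
      have nle: "\<forall>x\<in>E. n \<le> x" unfolding n_def using Min_le[OF fE] by blast
      have tn: "\<forall>y\<in>t. y < n" using Et(1) nE by blast
      have "t \<union> {n} \<subseteq> t \<union> E" using nE by auto
      then have "{n} \<in> Ft F t" using her Et tn unfolding Ft_def hereditary_def by auto
      then obtain \<gamma> where g: "\<gamma> < \<beta>" "rkle (link (Ft F t) n) \<gamma>" using rkle_D[OF less.prems] by blast
      define t' where "t' = insert n t"
      have sub: "Ft F t' \<subseteq> link (Ft F t) n"
      proof
        fix E' assume "E' \<in> Ft F t'"
        then have E': "\<forall>x\<in>E'. \<forall>y\<in>t'. y < x" "t' \<union> E' \<in> F" unfolding Ft_def by auto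
        have "\<forall>x\<in>E'. n < x" using E'(1) unfolding t'_def by auto
        moreover have "\<forall>x\<in>insert n E'. \<forall>y\<in>t. y < x" using E'(1) tn unfolding t'_def by auto
        moreover have "t \<union> insert n E' = t' \<union> E'" unfolding t'_def by auto
        ultimately show "E' \<in> link (Ft F t) n" using E'(2) unfolding link_def Ft_def by auto
      qed
      have rk': "rkle (Ft F t') \<gamma>" using rkle_anti[OF g(2) sub] .
      have Em: "E - {n} \<in> Ft F t'"
      proof -
        have "\<forall>x\<in>E - {n}. \<forall>y\<in>t'. y < x" using Et(1) nle unfolding t'_def by force
        moreover have "t' \<union> (E - {n}) = t \<union> E" using nE unfolding t'_def by auto
        ultimately show ?thesis using Et(2) unfolding Ft_def by simp
      qed
      have Eins: "E = insert n (E - {n})" using nE by auto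
      show ?thesis
      proof (cases \<beta> rule: ord_cases)
        case 1 then show ?thesis using g(1) ozero_le leD by blast
      next
        case (2 b)
        have "\<gamma> \<le> b" using g(1) succ_less_iff[OF 2] by simp
        then have "rkle (Ft F t') b" using rkle_mono[OF rk'] by simp
        then have "E - {n} \<in> G (Bc F) b" using less.IH[OF succ_less[OF 2]] Em by blast
        then show ?thesis using Eins 2 unfolding G_succ[OF 2] by blast
      next
        case 3
        define r where "r = (rho F t' :: 'a)"
        have rr: "rkle (Ft F t') r" unfolding r_def rho_def using rk' by (rule LeastI)
        have "r \<le> \<gamma>" unfolding r_def rho_def using rk' by (rule Least_le)
        then have rb: "r < \<beta>" using g(1) by simp
        have srb: "osucc r < \<beta>" using limit_succ_less[OF 3 rb nm] .
        have "t' \<in> {t. t \<subseteq> {0..n} \<and> n \<in> t}" unfolding t'_def using tn by auto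
        then have "osucc r \<in> Req F \<beta> n" using srb unfolding Req_def r_def by auto
        then have inB: "osucc r \<in> Bc F \<beta> (Min E)" unfolding Bc_def n_def using 3 by auto
        have "E - {n} \<in> G (Bc F) r" using less.IH[OF rb rr] Em by blast
        then have "E \<in> G (Bc F) (osucc r)" using Eins unfolding G_succ[OF osucc_is_succ[OF nm]] by blast
        then show ?thesis using False inB 3 unfolding G_lim[OF B 3] by blast
      qed
    qed
  qed
qed

theorem theorem4p1:
  fixes A :: "nat set set" and P :: "nat set"
    and B0 :: "'a::wellorder \<Rightarrow> nat \<Rightarrow> 'a set"
  assumes omega1_uncountable: "\<not> countable (UNIV :: 'a set)"
    and omega1_segments: "\<forall>\<alpha>::'a. countable {..<\<alpha>}"
    and B0: "approx_family B0"
    and A_nonempty: "A \<noteq> {}"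
    and A_hered: "hereditary A"
    and A_finite: "\<forall>E\<in>A. finite E"
    and P_inf: "infinite P"
    and bounded: "\<exists>b::'a. \<forall>\<alpha>. large B0 A P \<alpha> \<longrightarrow> \<alpha> \<le> b"
  shows "\<exists>B L. approx_family B \<and> L \<subseteq> P \<and> infinite L \<and>
           spread L (G B (index B0 A P)) \<subseteq> {E \<in> A. E \<subseteq> L} \<and>
           {E \<in> A. E \<subseteq> L} \<subseteq> {E \<in> G B (index B0 A P). E \<subseteq> L}"
proof -
  have nm: "\<exists>y. x < y" for x :: 'a
  proof (rule ccontr)
    assume "\<not> (\<exists>y. x < y)"
    then have nx: "\<And>z. \<not> x < z" by simp
    have "UNIV \<subseteq> insert x {..<x}"
    proof
      fix z :: 'a
      show "z \<in> insert x {..<x}"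
        using nx[of z] by (cases "z < x") (simp_all add: not_less_iff_gr_or_eq)
    qed
    moreover have "countable (insert x {..<x})" using omega1_segments by simp
    ultimately have "countable (UNIV :: 'a set)" by (rule countable_subset)
    then show False using omega1_uncountable by simp
  qed
  define \<alpha>0 where "\<alpha>0 = index B0 A P"
  have ub: "\<forall>\<alpha>. large B0 A P \<alpha> \<longrightarrow> \<alpha> \<le> \<alpha>0"
    unfolding \<alpha>0_def index_def using bounded by (rule LeastI_ex)
  have lst: "\<alpha>0 \<le> c" if "\<forall>\<alpha>. large B0 A P \<alpha> \<longrightarrow> \<alpha> \<le> c" for c
    unfolding \<alpha>0_def index_def using that by (rule Least_le)
  have emp: "{} \<in> A" using A_nonempty A_hered unfolding hereditary_def by blast
  have H: "\<forall>L. L \<subseteq> P \<and> infinite L \<longrightarrow> (\<forall>\<gamma><\<alpha>0. \<not> rkle (A \<inter> Pow L) \<gamma>)"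
  proof (intro allI impI notI)
    fix L and \<gamma> :: 'a assume L: "L \<subseteq> P \<and> infinite L" and g: "\<gamma> < \<alpha>0" and rk: "rkle (A \<inter> Pow L) \<gamma>"
    have "\<not> (\<forall>\<alpha>. large B0 A P \<alpha> \<longrightarrow> \<alpha> \<le> \<gamma>)"
    proof
      assume "\<forall>\<alpha>. large B0 A P \<alpha> \<longrightarrow> \<alpha> \<le> \<gamma>"
      then have "\<alpha>0 \<le> \<gamma>" by (rule lst)
      then show False using g by simp
    qed
    then obtain \<alpha> where a: "large B0 A P \<alpha>" "\<gamma> < \<alpha>" by (auto simp add: not_le)
    then have "\<exists>N. N \<subseteq> L \<and> infinite N \<and> spread N (G B0 \<alpha>) \<subseteq> A" using L unfolding large_def by simp
    then obtain N where N: "N \<subseteq> L" "infinite N" "spread N (G B0 \<alpha>) \<subseteq> A" by auto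
    have "spread N (G B0 \<alpha>) \<subseteq> A \<inter> Pow L" using N spread_pow[OF N(2)] by blast
    then have "rkle (spread N (G B0 \<alpha>)) \<gamma>" using rkle_anti[OF rk] by simp
    then have "\<alpha> \<le> \<gamma>" using LB[OF B0 nm N(2)] by simp
    then show False using a(2) by simp
  qed
  have s0: "is_succ_of (osucc \<alpha>0) \<alpha>0" using osucc_is_succ[OF nm] .
  have "\<not> large B0 A P (osucc \<alpha>0)"
  proof
    assume "large B0 A P (osucc \<alpha>0)"
    then have "osucc \<alpha>0 \<le> \<alpha>0" using ub by simp
    then show False using succ_less[OF s0] by simp
  qed
  then obtain M where M: "M \<subseteq> P" "infinite M"
    "\<not> (\<exists>N. N \<subseteq> M \<and> infinite N \<and> spread N (G B0 (osucc \<alpha>0)) \<subseteq> A)"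
    unfolding large_def by auto
  have "\<not> (\<forall>L. L \<subseteq> M \<and> infinite L \<longrightarrow> (\<forall>\<gamma><osucc \<alpha>0. \<not> rkle (A \<inter> Pow L) \<gamma>))"
  proof
    assume h: "\<forall>L. L \<subseteq> M \<and> infinite L \<longrightarrow> (\<forall>\<gamma><osucc \<alpha>0. \<not> rkle (A \<inter> Pow L) \<gamma>)"
    have "\<exists>N. N \<subseteq> M \<and> infinite N \<and> spread N (G B0 (osucc \<alpha>0)) \<subseteq> A"
      by (rule Rlem[OF B0 A_hered emp M(2) h])
    then show False using M(3) by (rule notE[rotated])
  qed
  then obtain L0 \<gamma> where L0: "L0 \<subseteq> M" "infinite L0" "\<gamma> < osucc \<alpha>0" "rkle (A \<inter> Pow L0) \<gamma>"
    by auto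
  have "\<gamma> \<le> \<alpha>0" using L0(3) succ_less_iff[OF s0] by simp
  then have rk0: "rkle (A \<inter> Pow L0) \<alpha>0" using rkle_mono[OF L0(4)] by simp
  define F where "F = A \<inter> Pow L0"
  have herF: "hereditary F" using A_hered unfolding F_def hereditary_def by blast
  have finF: "\<forall>E\<in>F. finite E" using A_finite unfolding F_def by blast
  have FtF: "Ft F {} = F" unfolding Ft_def by simp
  define B where "B = (Bc F :: 'a \<Rightarrow> nat \<Rightarrow> 'a set)"
  have B: "approx_family B" unfolding B_def using Bc_approx[OF omega1_segments] .
  have FG: "F \<subseteq> G B \<alpha>0" using LC[OF herF finF nm omega1_segments, of "{}" \<alpha>0] rk0 FtF
    unfolding B_def F_def by simp
  have hyp: "\<forall>L. L \<subseteq> L0 \<and> infinite L \<longrightarrow> (\<forall>\<gamma><\<alpha>0. \<not> rkle (A \<inter> Pow L) \<gamma>)"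
    using H L0(1) M(1) by (meson order_trans)
  have "\<exists>N. N \<subseteq> L0 \<and> infinite N \<and> spread N (G B \<alpha>0) \<subseteq> A"
    using Rlem[OF B A_hered emp L0(2) hyp] by simp
  then obtain L where L: "L \<subseteq> L0" "infinite L" "spread L (G B \<alpha>0) \<subseteq> A" by auto
  have c1: "spread L (G B \<alpha>0) \<subseteq> {E \<in> A. E \<subseteq> L}" using L(3) spread_pow[OF L(2)] by auto
  have c2: "{E \<in> A. E \<subseteq> L} \<subseteq> {E \<in> G B \<alpha>0. E \<subseteq> L}"
  proof
    fix E assume "E \<in> {E \<in> A. E \<subseteq> L}"
    then have "E \<in> A" "E \<subseteq> L" by auto
    then have "E \<in> F" using L(1) unfolding F_def by auto
    then show "E \<in> {E \<in> G B \<alpha>0. E \<subseteq> L}" using FG \<open>E \<subseteq> L\<close> by auto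
  qed
  have LP: "L \<subseteq> P" using L(1) L0(1) M(1) by blast
  have "approx_family B \<and> L \<subseteq> P \<and> infinite L \<and>
           spread L (G B \<alpha>0) \<subseteq> {E \<in> A. E \<subseteq> L} \<and>
           {E \<in> A. E \<subseteq> L} \<subseteq> {E \<in> G B \<alpha>0. E \<subseteq> L}" using B LP L(2) c1 c2 by simp
  then show ?thesis unfolding \<alpha>0_def by (intro exI)
qed

end
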